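(* Let $h:\{0,1\}^t\times\{0,1\}^t\to\{0,1\}$ be a Boolean function, and let $G$ be the graph with vertex set $V=h^{-1}(0)$ in which distinct $(x,y),(x',y')\in V$ are adjacent iff $h(x,y')=1$ or $h(x',y)=1$. Then $\chi(G)\ge\mathrm{Cov}_0(h)$. Moreover, if $h^{-1}(1)=\bigsqcup_{i=1}^m A_i\times B_i$ is a partition into $1$-monochromatic rectangles, then the bicliques $Q_i=S_i^-\times S_i^+$, where $S_i^-=\{(x,y)\in V: x\in A_i\}$ and $S_i^+=\{(x,y)\in V:y\in B_i\}$, are subgraphs of $G$ and every edge of $G$ belongs to at least one and at most two of $Q_1,\dots,Q_m$.
   Context: A $b$-monochromatic rectangle for $h$ is a set $A\times B$ with $A,B\subseteq\{0,1\}^t$ on which $h\equiv b$; $\mathrm{Cov}_0(h)$ is the minimum number of $0$-monochromatic rectangles whose union is $h^{-1}(0)$. A biclique $S^-\times S^+$ denotes the complete bipartite graph with all edges between $u\in S^-$ and $v\in S^+$. $\chi(G)$ is the chromatic number. *)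

theory Defs
  imports Main
begin

text \<open>Boolean cube {0,1}^t as bit lists of length t; True = 1.\<close>
definition cube :: "nat \<Rightarrow> bool list set" where
  "cube t = {x. length x = t}"

definition Vset :: "(bool list \<Rightarrow> bool list \<Rightarrow> bool) \<Rightarrow> nat \<Rightarrow> (bool list \<times> bool list) set" where
  "Vset h t = {(x, y). x \<in> cube t \<and> y \<in> cube t \<and> \<not> h x y}"

definition adjG :: "(bool list \<Rightarrow> bool list \<Rightarrow> bool) \<Rightarrow> nat \<Rightarrow>
    bool list \<times> bool list \<Rightarrow> bool list \<times> bool list \<Rightarrow> bool" where
  "adjG h t u v \<longleftrightarrow> u \<in> Vset h t \<and> v \<in> Vset h t \<and> u \<noteq> v \<and>
     (h (fst u) (snd v) \<or> h (fst v) (snd u))"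

definition chromatic_number :: "'v set \<Rightarrow> ('v \<Rightarrow> 'v \<Rightarrow> bool) \<Rightarrow> nat" where
  "chromatic_number V E = (LEAST k. \<exists>c :: 'v \<Rightarrow> nat.
      (\<forall>v\<in>V. c v < k) \<and> (\<forall>u\<in>V. \<forall>v\<in>V. E u v \<longrightarrow> c u \<noteq> c v))"

definition mono_rect :: "(bool list \<Rightarrow> bool list \<Rightarrow> bool) \<Rightarrow> nat \<Rightarrow> bool \<Rightarrow>
    bool list set \<Rightarrow> bool list set \<Rightarrow> bool" where
  "mono_rect h t b A B \<longleftrightarrow> A \<subseteq> cube t \<and> B \<subseteq> cube t \<and> (\<forall>x\<in>A. \<forall>y\<in>B. h x y = b)"

definition Cov0 :: "(bool list \<Rightarrow> bool list \<Rightarrow> bool) \<Rightarrow> nat \<Rightarrow> nat" where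
  "Cov0 h t = (LEAST k. \<exists>A B :: nat \<Rightarrow> bool list set.
      (\<forall>i<k. mono_rect h t False (A i) (B i)) \<and> (\<Union>i<k. A i \<times> B i) = Vset h t)"

definition biclique_edge :: "'v set \<Rightarrow> 'v set \<Rightarrow> 'v \<Rightarrow> 'v \<Rightarrow> bool" where
  "biclique_edge S T u v \<longleftrightarrow> (u \<in> S \<and> v \<in> T) \<or> (v \<in> S \<and> u \<in> T)"

end

theory Submission
  imports Defs
begin

lemma cube_fin: "finite (Vset h t)"
proof -
  have "finite {xs::bool list. set xs \<subseteq> UNIV \<and> length xs = t}"
    by (rule finite_lists_length_eq) simp
  moreover have "{xs::bool list. set xs \<subseteq> UNIV \<and> length xs = t} = cube t" by (simp add: cube_def)
  ultimately have "finite (cube t)" by simp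
  moreover have "Vset h t \<subseteq> cube t \<times> cube t" by (auto simp: Vset_def)
  ultimately show ?thesis by (meson finite_SigmaI finite_subset)
qed

lemma cov_le:
  assumes col: "\<forall>v\<in>Vset h t. c v < k" "\<forall>u\<in>Vset h t. \<forall>v\<in>Vset h t. adjG h t u v \<longrightarrow> c u \<noteq> c v"
  shows "Cov0 h t \<le> k"
proof -
  define I where "I i = {v\<in>Vset h t. c v = i}" for i
  define A where "A i = fst ` I i" for i
  define B where "B i = snd ` I i" for i
  have key: "\<not> h (fst u) (snd v)" if "u \<in> I i" "v \<in> I i" for u v i
  proof (cases "u = v")
    case True thus ?thesis using that by (auto simp: I_def Vset_def)
  next
    case False
    have uv: "u \<in> Vset h t" "v \<in> Vset h t" "c u = c v" using that by (auto simp: I_def)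
    hence "\<not> adjG h t u v" using col(2) by blast
    thus ?thesis using uv False unfolding adjG_def by blast
  qed
  have IV: "I i \<subseteq> Vset h t" for i by (auto simp: I_def)
  have VC: "fst ` Vset h t \<subseteq> cube t" "snd ` Vset h t \<subseteq> cube t" by (auto simp: Vset_def)
  have m: "mono_rect h t False (A i) (B i)" for i
  proof -
    have "A i \<subseteq> cube t" using IV VC unfolding A_def by blast
    moreover have "B i \<subseteq> cube t" using IV VC unfolding B_def by blast
    moreover have "\<forall>x\<in>A i. \<forall>y\<in>B i. h x y = False"
    proof (intro ballI)
      fix x y assume "x \<in> A i" "y \<in> B i"
      then obtain u v where "u \<in> I i" "v \<in> I i" "x = fst u" "y = snd v"
        unfolding A_def B_def by blast
      thus "h x y = False" using key by blast
    qed
    ultimately show ?thesis unfolding mono_rect_def by blast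
  qed
  have u: "(\<Union>i<k. A i \<times> B i) = Vset h t"
  proof
    show "(\<Union>i<k. A i \<times> B i) \<subseteq> Vset h t"
    proof
      fix p assume "p \<in> (\<Union>i<k. A i \<times> B i)"
      then obtain i u v where "u \<in> I i" "v \<in> I i" "p = (fst u, snd v)"
        by (auto simp: A_def B_def)
      moreover have "fst u \<in> cube t" "snd v \<in> cube t" using IV VC \<open>u \<in> I i\<close> \<open>v \<in> I i\<close> by blast+
      ultimately show "p \<in> Vset h t" using key[of u i v] by (simp add: Vset_def)
    qed
  next
    show "Vset h t \<subseteq> (\<Union>i<k. A i \<times> B i)"
    proof
      fix p assume p: "p \<in> Vset h t"
      hence "p \<in> I (c p)" by (simp add: I_def)
      hence "fst p \<in> A (c p)" "snd p \<in> B (c p)" unfolding A_def B_def by blast+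
      hence "p \<in> A (c p) \<times> B (c p)" by (simp add: mem_Times_iff)
      thus "p \<in> (\<Union>i<k. A i \<times> B i)" using col(1) p by blast
    qed
  qed
  show ?thesis unfolding Cov0_def
    by (rule Least_le) (use m u in blast)
qed

lemma card_le1: "(\<forall>i\<in>S. \<forall>j\<in>S. i = j) \<Longrightarrow> finite S \<Longrightarrow> card S \<le> 1"
  by (metis One_nat_def card_le_Suc0_iff_eq)

lemma edge_count:
  fixes m :: nat and A B :: "nat \<Rightarrow> bool list set"
  assumes mono: "\<forall>i<m. mono_rect h t True (A i) (B i)"
    and disj: "\<forall>i<m. \<forall>j<m. i \<noteq> j \<longrightarrow> (A i \<times> B i) \<inter> (A j \<times> B j) = {}"
    and un: "(\<Union>i<m. A i \<times> B i) = {(x, y). x \<in> cube t \<and> y \<in> cube t \<and> h x y}"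
    and adj: "adjG h t u v"
  shows "1 \<le> card {i. i < m \<and> biclique_edge {p \<in> Vset h t. fst p \<in> A i} {p \<in> Vset h t. snd p \<in> B i} u v}
          \<and> card {i. i < m \<and> biclique_edge {p \<in> Vset h t. fst p \<in> A i} {p \<in> Vset h t. snd p \<in> B i} u v} \<le> 2"
proof -
  let ?S = "{i. i < m \<and> biclique_edge {p \<in> Vset h t. fst p \<in> A i} {p \<in> Vset h t. snd p \<in> B i} u v}"
  have fin: "finite ?S" by simp
  have uv: "u \<in> Vset h t" "v \<in> Vset h t" using adj by (auto simp: adjG_def)
  have cu: "fst u \<in> cube t" "snd u \<in> cube t" "fst v \<in> cube t" "snd v \<in> cube t"
    using uv by (auto simp: Vset_def)
  have "h (fst u) (snd v) \<or> h (fst v) (snd u)" using adj by (auto simp: adjG_def)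
  then obtain i where "i < m" "i \<in> ?S"
  proof
    assume "h (fst u) (snd v)"
    hence "(fst u, snd v) \<in> (\<Union>i<m. A i \<times> B i)" using un cu by auto
    then obtain i where "i < m" "fst u \<in> A i" "snd v \<in> B i" by auto
    thus ?thesis using that uv by (auto simp: biclique_edge_def)
  next
    assume "h (fst v) (snd u)"
    hence "(fst v, snd u) \<in> (\<Union>i<m. A i \<times> B i)" using un cu by auto
    then obtain i where "i < m" "fst v \<in> A i" "snd u \<in> B i" by auto
    thus ?thesis using that uv by (auto simp: biclique_edge_def)
  qed
  hence "?S \<noteq> {}" by blast
  hence r1: "1 \<le> card ?S" using fin by (simp add: Suc_le_eq card_gt_0_iff)
  let ?S1 = "{i. i < m \<and> (fst u, snd v) \<in> A i \<times> B i}"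
  let ?S2 = "{i. i < m \<and> (fst v, snd u) \<in> A i \<times> B i}"
  have sub: "?S \<subseteq> ?S1 \<union> ?S2" by (auto simp: biclique_edge_def)
  have one: "card {i. i < m \<and> q \<in> A i \<times> B i} \<le> 1" for q
  proof (rule card_le1)
    show "\<forall>i\<in>{i. i < m \<and> q \<in> A i \<times> B i}. \<forall>j\<in>{i. i < m \<and> q \<in> A i \<times> B i}. i = j"
    proof (intro ballI)
      fix i j assume i: "i \<in> {i. i < m \<and> q \<in> A i \<times> B i}" and j: "j \<in> {i. i < m \<and> q \<in> A i \<times> B i}"
      show "i = j"
      proof (rule ccontr)
        assume "i \<noteq> j"
        hence "(A i \<times> B i) \<inter> (A j \<times> B j) = {}" using disj i j by blast
        thus False using i j by blast
      qed
    qed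
  qed simp
  have c1: "card ?S1 \<le> 1" by (rule one)
  have c2: "card ?S2 \<le> 1" by (rule one)
  have "card ?S \<le> card (?S1 \<union> ?S2)" by (rule card_mono[OF _ sub]) simp
  also have "\<dots> \<le> card ?S1 + card ?S2" by (rule card_Un_le)
  finally have "card ?S \<le> 2" using c1 c2 by simp
  thus ?thesis using r1 by blast
qed

theorem mainTheorem11:
  fixes h :: "bool list \<Rightarrow> bool list \<Rightarrow> bool" and t :: nat
  shows "chromatic_number (Vset h t) (adjG h t) \<ge> Cov0 h t \<and>
    (\<forall>(m::nat) (A::nat \<Rightarrow> bool list set) (B::nat \<Rightarrow> bool list set).
       (\<forall>i<m. mono_rect h t True (A i) (B i)) \<longrightarrow>
       (\<forall>i<m. \<forall>j<m. i \<noteq> j \<longrightarrow> (A i \<times> B i) \<inter> (A j \<times> B j) = {}) \<longrightarrow>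
       (\<Union>i<m. A i \<times> B i) = {(x, y). x \<in> cube t \<and> y \<in> cube t \<and> h x y} \<longrightarrow>
       (\<forall>i<m. \<forall>u v. biclique_edge {p \<in> Vset h t. fst p \<in> A i} {p \<in> Vset h t. snd p \<in> B i} u v
                  \<longrightarrow> adjG h t u v)
       \<and> (\<forall>u v. adjG h t u v \<longrightarrow>
            1 \<le> card {i. i < m \<and> biclique_edge {p \<in> Vset h t. fst p \<in> A i} {p \<in> Vset h t. snd p \<in> B i} u v}
          \<and> card {i. i < m \<and> biclique_edge {p \<in> Vset h t. fst p \<in> A i} {p \<in> Vset h t. snd p \<in> B i} u v} \<le> 2))"
proof (intro conjI allI impI)
  let ?P = "\<lambda>k. \<exists>c :: bool list \<times> bool list \<Rightarrow> nat.
      (\<forall>v\<in>Vset h t. c v < k) \<and> (\<forall>u\<in>Vset h t. \<forall>v\<in>Vset h t. adjG h t u v \<longrightarrow> c u \<noteq> c v)"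
  obtain f :: "bool list \<times> bool list \<Rightarrow> nat" and n where f: "f ` Vset h t = {i. i < n}" "inj_on f (Vset h t)"
    using finite_imp_inj_to_nat_seg[OF cube_fin] by metis
  have f1: "\<forall>v\<in>Vset h t. f v < n" using f(1) by blast
  have f2: "\<forall>u\<in>Vset h t. \<forall>v\<in>Vset h t. adjG h t u v \<longrightarrow> f u \<noteq> f v"
  proof (intro ballI impI)
    fix u v assume "u \<in> Vset h t" "v \<in> Vset h t" "adjG h t u v"
    moreover have "u \<noteq> v" using \<open>adjG h t u v\<close> unfolding adjG_def by blast
    ultimately show "f u \<noteq> f v" using f(2) unfolding inj_on_def by blast
  qed
  have "?P n" using f1 f2 by blast
  hence "?P (chromatic_number (Vset h t) (adjG h t))"
    unfolding chromatic_number_def by (rule LeastI)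
  thus "Cov0 h t \<le> chromatic_number (Vset h t) (adjG h t)" using cov_le by blast
next
  fix m A B
  assume mono: "\<forall>i<m. mono_rect h t True (A i) (B i)"
    and disj: "\<forall>i<m. \<forall>j<m. i \<noteq> j \<longrightarrow> (A i \<times> B i) \<inter> (A j \<times> B j) = {}"
    and un: "(\<Union>i<m. A i \<times> B i) = {(x, y). x \<in> cube t \<and> y \<in> cube t \<and> h x y}"
    fix i u v assume i: "i < m" and be: "biclique_edge {p \<in> Vset h t. fst p \<in> A i} {p \<in> Vset h t. snd p \<in> B i} u v"
    have hm: "\<And>x y. x \<in> A i \<Longrightarrow> y \<in> B i \<Longrightarrow> h x y" using mono i by (auto simp: mono_rect_def)
    have nd: "\<And>w. w \<in> Vset h t \<Longrightarrow> \<not> h (fst w) (snd w)" by (auto simp: Vset_def)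
    from be have "(u \<in> Vset h t \<and> v \<in> Vset h t \<and> h (fst u) (snd v)) \<or> (u \<in> Vset h t \<and> v \<in> Vset h t \<and> h (fst v) (snd u))"
      unfolding biclique_edge_def using hm by blast
    thus "adjG h t u v" unfolding adjG_def using nd by metis
next
  fix m :: nat and A B :: "nat \<Rightarrow> bool list set" and u v :: "bool list \<times> bool list"
  assume "\<forall>i<m. mono_rect h t True (A i) (B i)" "\<forall>i<m. \<forall>j<m. i \<noteq> j \<longrightarrow> (A i \<times> B i) \<inter> (A j \<times> B j) = {}"
    "(\<Union>i<m. A i \<times> B i) = {(x, y). x \<in> cube t \<and> y \<in> cube t \<and> h x y}" "adjG h t u v"
  thus "1 \<le> card {i. i < m \<and> biclique_edge {p \<in> Vset h t. fst p \<in> A i} {p \<in> Vset h t. snd p \<in> B i} u v}" using edge_count[where m=m and A=A and B=B and u=u and v=v and h=h and t=t] by simp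
next
  fix m :: nat and A B :: "nat \<Rightarrow> bool list set" and u v :: "bool list \<times> bool list"
  assume "\<forall>i<m. mono_rect h t True (A i) (B i)" "\<forall>i<m. \<forall>j<m. i \<noteq> j \<longrightarrow> (A i \<times> B i) \<inter> (A j \<times> B j) = {}"
    "(\<Union>i<m. A i \<times> B i) = {(x, y). x \<in> cube t \<and> y \<in> cube t \<and> h x y}" "adjG h t u v"
  thus "card {i. i < m \<and> biclique_edge {p \<in> Vset h t. fst p \<in> A i} {p \<in> Vset h t. snd p \<in> B i} u v} \<le> 2" using edge_count[where m=m and A=A and B=B and u=u and v=v and h=h and t=t] by simp
qed

end
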